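(* Let $\mathcal C$ be a clustering problem (with $|\mathcal X|\ge2$), let $t\in\mathbb N$, and let $N_1,\dots,N_K\ge1$ be integers with $\sum_iN_i=t$. For each $i\in[K]$ let $\tilde x_i=(\tilde x_{i,1},\dots,\tilde x_{i,N_i})\in\mathcal X^{N_i}$, let $\hat P_i$ be its empirical distribution, $\hat P=(\hat P_1,\dots,\hat P_K)$, and $w=(N_1/t,\dots,N_K/t)$. For $\sigma\in\mathcal C$ let $L_\sigma=\sup_{Q\in\Lambda_\sigma}\prod_{i=1}^K\prod_{n=1}^{N_i}Q_i(\tilde x_{i,n})$, and for $\sigma_1,\sigma_2\in\mathcal C$ let $Z_{\sigma_1,\sigma_2}=\log\frac{L_{\sigma_1}}{L_{\sigma_2}}$. Let $\hat\sigma\in\arg\min_{\sigma\in\mathcal C}g_{\hat P}^\sigma(w)$. Then each $L_\sigma\in(0,\infty)$ and $$\max_{\sigma\in\mathcal C}\min_{\sigma'\in\mathcal C\setminus\{\sigma\}}Z_{\sigma,\sigma'}=t\,G_{\hat P}^{\hat\sigma}(w)-t\,g_{\hat P}^{\hat\sigma}(w),$$ and the maximum on the left-hand side is attained at $\sigma=\hat\sigma$.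
   Context: Framework. Let $\mathcal X$ be a finite alphabet with $|\mathcal X|\ge2$, $\mathcal P(\mathcal X)$ the set of probability distributions on $\mathcal X$, and $K\ge2$ an integer (number of arms); $[n]=\{1,\dots,n\}$. A hypothesis is a collection $\sigma=\{\mathcal A_1^\sigma,\dots,\mathcal A_{M_\sigma}^\sigma\}$ ($M_\sigma\ge1$) of pairwise disjoint subsets of $[K]$, each of cardinality at least 2 (clusters); let $\mathcal A^\sigma_{M_\sigma+1}=[K]\setminus\bigcup_{m\le M_\sigma}\mathcal A_m^\sigma$ (unconstrained group, possibly empty). $\Lambda_\sigma$ is the set of $P\in\mathcal P(\mathcal X)^K$ with $P_i=P_j$ whenever $i,j\in\mathcal A_m^\sigma$ for some $m\le M_\sigma$, and $P_i\neq P_j$ whenever $i\in\mathcal A_{m_1}^\sigma$, $j\in\mathcal A_{m_2}^\sigma$ with $m_1\ne m_2\in[M_\sigma+1]$. A clustering problem is a finite set $\mathcal C$ of hypotheses with $|\mathcal C|\ge2$. Functions. $D(P\|Q)$ is the KL divergence. For $\mathcal A\subseteq[K]$, $G(P_{\mathcal A},w_{\mathcal A})=0$ if $w_i=0$ for all $i\in\mathcal A$, and otherwise $G(P_{\mathcal A},w_{\mathcal A})=\sum_{i\in\mathcal A}w_iD(P_i\|W)$ with $W=\sum_{i\in\mathcal A}w_iP_i/\sum_{i\in\mathcal A}w_i$. For $\sigma\in\mathcal C$, $g_P^\sigma(w)=\sum_{m=1}^{M_\sigma}G(P_{\mathcal A_m^\sigma},w_{\mathcal A_m^\sigma})$ and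 $G_P^\sigma(w)=\min_{\sigma'\in\mathcal C\setminus\{\sigma\}}g_P^{\sigma'}(w)$. The empirical distribution of $x^n$ is $\hat P_{x^n}(a)=\frac1n\sum_{k=1}^n1\{x_k=a\}$. *)

theory Defs
  imports Complex_Main "HOL-Library.Extended_Real" "HOL-Library.Cardinality"
begin

definition is_dist :: "('x::finite \<Rightarrow> real) \<Rightarrow> bool" where
  "is_dist p \<longleftrightarrow> (\<forall>a. 0 \<le> p a) \<and> (\<Sum>a\<in>UNIV. p a) = 1"

text \<open>KL divergence with the convention 0 log 0 = 0 (only used where P is abs. continuous w.r.t. Q).\<close>
definition KL :: "('x::finite \<Rightarrow> real) \<Rightarrow> ('x \<Rightarrow> real) \<Rightarrow> real" where
  "KL p q = (\<Sum>a\<in>UNIV. if p a = 0 then 0 else p a * ln (p a / q a))"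

definition Gdiv :: "(nat \<Rightarrow> 'x::finite \<Rightarrow> real) \<Rightarrow> (nat \<Rightarrow> real) \<Rightarrow> nat set \<Rightarrow> real" where
  "Gdiv P w A =
     (if \<forall>i\<in>A. w i = 0 then 0
      else (let W = (\<lambda>a. (\<Sum>i\<in>A. w i * P i a) / (\<Sum>i\<in>A. w i))
            in \<Sum>i\<in>A. w i * KL (P i) W))"

definition g_hyp :: "(nat \<Rightarrow> 'x::finite \<Rightarrow> real) \<Rightarrow> (nat \<Rightarrow> real) \<Rightarrow> nat set set \<Rightarrow> real" where
  "g_hyp P w \<sigma> = (\<Sum>A\<in>\<sigma>. Gdiv P w A)"

definition G_hyp :: "nat set set set \<Rightarrow> (nat \<Rightarrow> 'x::finite \<Rightarrow> real) \<Rightarrow> (nat \<Rightarrow> real) \<Rightarrow> nat set set \<Rightarrow> real" where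
  "G_hyp C P w \<sigma> = Min ((\<lambda>\<sigma>'. g_hyp P w \<sigma>') ` (C - {\<sigma>}))"

definition is_hypothesis :: "nat \<Rightarrow> nat set set \<Rightarrow> bool" where
  "is_hypothesis K \<sigma> \<longleftrightarrow> \<sigma> \<noteq> {} \<and> (\<forall>A\<in>\<sigma>. A \<subseteq> {1..K} \<and> card A \<ge> 2)
     \<and> (\<forall>A\<in>\<sigma>. \<forall>B\<in>\<sigma>. A \<noteq> B \<longrightarrow> A \<inter> B = {})"

text \<open>Clusters together with the unconstrained group (possibly empty).\<close>
definition groups :: "nat \<Rightarrow> nat set set \<Rightarrow> nat set set" where
  "groups K \<sigma> = insert ({1..K} - \<Union>\<sigma>) \<sigma>"

definition Lambda :: "nat \<Rightarrow> nat set set \<Rightarrow> (nat \<Rightarrow> 'x::finite \<Rightarrow> real) set" where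
  "Lambda K \<sigma> = {P. (\<forall>i\<in>{1..K}. is_dist (P i))
       \<and> (\<forall>A\<in>\<sigma>. \<forall>i\<in>A. \<forall>j\<in>A. P i = P j)
       \<and> (\<forall>A\<in>groups K \<sigma>. \<forall>B\<in>groups K \<sigma>. A \<noteq> B \<longrightarrow> (\<forall>i\<in>A. \<forall>j\<in>B. P i \<noteq> P j))}"

definition clustering_problem :: "nat \<Rightarrow> nat set set set \<Rightarrow> bool" where
  "clustering_problem K C \<longleftrightarrow> finite C \<and> card C \<ge> 2 \<and> (\<forall>\<sigma>\<in>C. is_hypothesis K \<sigma>)"

definition emp_dist :: "'x list \<Rightarrow> 'x \<Rightarrow> real" where
  "emp_dist xs a = (1 / real (length xs)) * (\<Sum>k<length xs. if xs ! k = a then 1 else 0)"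

definition likelihood :: "nat \<Rightarrow> (nat \<Rightarrow> 'x::finite list) \<Rightarrow> nat set set \<Rightarrow> ereal" where
  "likelihood K xt \<sigma> =
     (SUP Q\<in>(Lambda K \<sigma> :: (nat \<Rightarrow> 'x \<Rightarrow> real) set).
        ereal (\<Prod>i\<in>{1..K}. \<Prod>n<length (xt i). Q i (xt i ! n)))"

end

theory Submission
  imports Defs
begin


lemma sum_ind_count: "(\<Sum>k<length xs. if xs!k = a then 1 else 0::real) = real (count_list xs a)"
proof (induction xs)
  case (Cons x xs)
  have "(\<Sum>k<length (x#xs). if (x#xs)!k = a then 1 else 0::real)
     = (if x = a then 1 else 0) + (\<Sum>k<length xs. if xs!k = a then 1 else 0::real)"
    by (simp only: length_Cons sum.lessThan_Suc_shift nth_Cons_0 nth_Cons_Suc)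
  then show ?case using Cons by simp
qed simp

lemma emp_dist_count: "emp_dist xs a = real (count_list xs a) / real (length xs)"
  unfolding emp_dist_def sum_ind_count by simp

lemma prod_count:
  fixes f :: "'x::finite \<Rightarrow> 'b::comm_monoid_mult"
  shows "(\<Prod>n<length xs. f (xs!n)) = (\<Prod>a\<in>UNIV. f a ^ count_list xs a)"
proof (induction xs)
  case Nil then show ?case by simp
next
  case (Cons x xs)
  have "(\<Prod>a\<in>UNIV. f a ^ count_list (x#xs) a) = (\<Prod>a\<in>UNIV. f a ^ count_list xs a * (if x = a then f a else 1))"
    by (rule prod.cong) (auto simp: power_Suc2 simp del: power_Suc)
  also have "\<dots> = (\<Prod>a\<in>UNIV. f a ^ count_list xs a) * f x"
    by (simp add: prod.distrib prod.delta)
  finally have X: "(\<Prod>a\<in>UNIV. f a ^ count_list (x#xs) a) = (\<Prod>a\<in>UNIV. f a ^ count_list xs a) * f x" .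
  have "(\<Prod>n<length (x#xs). f ((x#xs)!n)) = f x * (\<Prod>n<length xs. f (xs!n))"
    by (simp only: length_Cons prod.lessThan_Suc_shift nth_Cons_0 nth_Cons_Suc)
  then show ?case using Cons X by (simp add: mult.commute)
qed

lemma sum_count_UNIV: "(\<Sum>a\<in>(UNIV::'x::finite set). count_list xs a) = length xs"
  by (rule sum_count_set) auto

lemma ln_pow_gen: "(n = 0 \<or> (x::real) > 0) \<Longrightarrow> ln (x ^ n) = real n * ln x"
  by (auto simp: ln_realpow)

lemma gibbs:
  fixes m :: "'x::finite \<Rightarrow> nat" and q :: "'x \<Rightarrow> real"
  assumes M: "M = real (\<Sum>a\<in>UNIV. m a)" "M > 0"
    and q: "\<And>a. q a \<ge> 0" "(\<Sum>a\<in>UNIV. q a) = 1"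
  shows "(\<Prod>a\<in>UNIV. q a ^ m a) \<le> (\<Prod>a\<in>UNIV. (m a / M) ^ m a)"
proof (cases "\<exists>a. m a > 0 \<and> q a = 0")
  case True
  then obtain a where "m a > 0" "q a = 0" by blast
  then have "(\<Prod>a\<in>UNIV. q a ^ m a) = 0"
    by (intro prod_zero) auto
  moreover have "(\<Prod>a\<in>UNIV. (m a / M) ^ m a) \<ge> 0"
    using M by (intro prod_nonneg) auto
  ultimately show ?thesis by linarith
next
  case False
  define S where "S = {a. m a > 0}"
  have pq: "q a > 0" if "a \<in> S" for a
  proof -
    have "m a > 0" using that unfolding S_def by simp
    then have "q a \<noteq> 0" using False by blast
    then show ?thesis using q(1)[of a] by (simp add: le_neq_trans)
  qed
  have pm: "m a / M > 0" if "a \<in> S" for a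
  proof -
    have "m a > 0" using that unfolding S_def by simp
    then show ?thesis using M(2) by (simp add: divide_pos_pos)
  qed
  have L: "(\<Prod>a\<in>UNIV. f a ^ m a) = (\<Prod>a\<in>S. f a ^ m a)" for f :: "'x \<Rightarrow> real"
    by (rule prod.mono_neutral_right) (simp_all add: S_def)
  have "(\<Sum>a\<in>S. real (m a) * ln (q a)) - (\<Sum>a\<in>S. real (m a) * ln (m a / M))
        = (\<Sum>a\<in>S. real (m a) * ln (q a * M / m a))"
    unfolding sum_subtractf[symmetric]
  proof (rule sum.cong)
    fix a assume a: "a \<in> S"
    have "ln (q a * M / m a) = ln (q a) - ln (m a / M)"
    proof -
      have "real (m a) > 0" using a unfolding S_def by simp
      then show ?thesis using pq[OF a] M(2) by (simp add: ln_div ln_mult)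
    qed
    then show "real (m a) * ln (q a) - real (m a) * ln (m a / M) = real (m a) * ln (q a * M / m a)"
      by (simp add: right_diff_distrib)
  qed simp
  also have "\<dots> \<le> (\<Sum>a\<in>S. real (m a) * (q a * M / m a - 1))"
    using pq pm M by (intro sum_mono mult_left_mono ln_le_minus_one) (auto simp: S_def)
  also have "\<dots> = (\<Sum>a\<in>S. q a * M - m a)"
    by (rule sum.cong) (auto simp: S_def field_simps)
  also have "\<dots> = M * (\<Sum>a\<in>S. q a) - (\<Sum>a\<in>S. real (m a))"
    by (simp add: sum_subtractf sum_distrib_left mult.commute)
  finally have le0: "(\<Sum>a\<in>S. real (m a) * ln (q a)) - (\<Sum>a\<in>S. real (m a) * ln (m a / M))
     \<le> M * (\<Sum>a\<in>S. q a) - (\<Sum>a\<in>S. real (m a))" .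
  have sm: "(\<Sum>a\<in>S. real (m a)) = M"
    unfolding M(1) of_nat_sum by (rule sum.mono_neutral_left) (auto simp: S_def)
  have sq: "(\<Sum>a\<in>S. q a) \<le> 1"
    using q sum_mono2[of UNIV S q] by simp
  have "M * (\<Sum>a\<in>S. q a) \<le> M" using sq M(2) by simp
  then have le: "(\<Sum>a\<in>S. real (m a) * ln (q a)) \<le> (\<Sum>a\<in>S. real (m a) * ln (m a / M))"
    using le0 sm by linarith
  have "ln (\<Prod>a\<in>S. q a ^ m a) \<le> ln (\<Prod>a\<in>S. (m a / M) ^ m a)"
  proof -
    have e1: "ln (\<Prod>a\<in>S. q a ^ m a) = (\<Sum>a\<in>S. real (m a) * ln (q a))"
      proof -
      have "ln (\<Prod>a\<in>S. q a ^ m a) = (\<Sum>a\<in>S. ln (q a ^ m a))"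
        by (rule ln_prod) (auto dest: pq)
      then show ?thesis by (simp add: ln_realpow)
    qed
    have e2: "ln (\<Prod>a\<in>S. (m a / M) ^ m a) = (\<Sum>a\<in>S. real (m a) * ln (m a / M))"
      proof -
      have "ln (\<Prod>a\<in>S. (m a / M) ^ m a) = (\<Sum>a\<in>S. ln ((m a / M) ^ m a))"
        by (rule ln_prod) (auto dest: pm)
      then show ?thesis by (simp add: ln_realpow)
    qed
    show ?thesis using e1 e2 le by simp
  qed
  then have "(\<Prod>a\<in>S. q a ^ m a) \<le> (\<Prod>a\<in>S. (m a / M) ^ m a)"
    using pq pm by (subst (asm) ln_le_cancel_iff) (auto intro!: prod_pos)
  then show ?thesis by (simp add: L)
qed



definition Ws :: "(nat \<Rightarrow> 'x::finite list) \<Rightarrow> nat set \<Rightarrow> 'x \<Rightarrow> real" where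
  "Ws xt A a = (\<Sum>j\<in>A. real (count_list (xt j) a)) / (\<Sum>j\<in>A. real (length (xt j)))"

definition cl :: "nat set set \<Rightarrow> nat \<Rightarrow> nat set" where
  "cl \<sigma> i = (THE A. A \<in> \<sigma> \<and> i \<in> A)"

definition Qs :: "nat set set \<Rightarrow> (nat \<Rightarrow> 'x::finite list) \<Rightarrow> nat \<Rightarrow> 'x \<Rightarrow> real" where
  "Qs \<sigma> xt i = (if i \<in> \<Union>\<sigma> then Ws xt (cl \<sigma> i) else emp_dist (xt i))"

definition lik :: "nat \<Rightarrow> (nat \<Rightarrow> 'x::finite list) \<Rightarrow> (nat \<Rightarrow> 'x \<Rightarrow> real) \<Rightarrow> real" where
  "lik K xt Q = (\<Prod>i\<in>{1..K}. \<Prod>a\<in>UNIV. Q i a ^ count_list (xt i) a)"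

lemma cl_eq: "is_hypothesis K \<sigma> \<Longrightarrow> A \<in> \<sigma> \<Longrightarrow> i \<in> A \<Longrightarrow> cl \<sigma> i = A"
  unfolding cl_def is_hypothesis_def by (rule the_equality) blast+

lemma hyp_sub: "is_hypothesis K \<sigma> \<Longrightarrow> \<Union>\<sigma> \<subseteq> {1..K}"
  unfolding is_hypothesis_def by blast

lemma hyp_finite: "is_hypothesis K \<sigma> \<Longrightarrow> finite \<sigma>"
proof -
  assume h: "is_hypothesis K \<sigma>"
  have "\<sigma> \<subseteq> Pow {1..K}" using hyp_sub[OF h] by blast
  then show ?thesis by (rule finite_subset) simp
qed

lemma hyp_cl_finite: "is_hypothesis K \<sigma> \<Longrightarrow> A \<in> \<sigma> \<Longrightarrow> finite A \<and> A \<noteq> {}"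
  unfolding is_hypothesis_def by (metis card.infinite card.empty not_numeral_le_zero)

lemma decomp_prod:
  fixes h :: "nat \<Rightarrow> 'b::comm_monoid_mult"
  assumes "is_hypothesis K \<sigma>"
  shows "(\<Prod>i\<in>{1..K}. h i) = (\<Prod>i\<in>{1..K} - \<Union>\<sigma>. h i) * (\<Prod>A\<in>\<sigma>. \<Prod>i\<in>A. h i)"
proof -
  have e: "{1..K} = ({1..K} - \<Union>\<sigma>) \<union> \<Union>\<sigma>" using hyp_sub[OF assms] by blast
  have f: "finite (\<Union>\<sigma>)" using hyp_sub[OF assms] finite_subset by blast
  have "(\<Prod>i\<in>{1..K}. h i) = (\<Prod>i\<in>{1..K} - \<Union>\<sigma>. h i) * (\<Prod>i\<in>\<Union>\<sigma>. h i)"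
    by (subst e, rule prod.union_disjoint) (use f in auto)
  also have "(\<Prod>i\<in>\<Union>\<sigma>. h i) = (\<Prod>A\<in>\<sigma>. \<Prod>i\<in>A. h i)"
    using prod.UNION_disjoint[of \<sigma> "\<lambda>A. A" h] hyp_finite[OF assms] hyp_cl_finite[OF assms] assms
    unfolding is_hypothesis_def by auto
  finally show ?thesis .
qed

lemma decomp_sum:
  fixes h :: "nat \<Rightarrow> 'b::comm_monoid_add"
  assumes "is_hypothesis K \<sigma>"
  shows "(\<Sum>i\<in>{1..K}. h i) = (\<Sum>i\<in>{1..K} - \<Union>\<sigma>. h i) + (\<Sum>A\<in>\<sigma>. \<Sum>i\<in>A. h i)"
proof -
  have e: "{1..K} = ({1..K} - \<Union>\<sigma>) \<union> \<Union>\<sigma>" using hyp_sub[OF assms] by blast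
  have f: "finite (\<Union>\<sigma>)" using hyp_sub[OF assms] finite_subset by blast
  have "(\<Sum>i\<in>{1..K}. h i) = (\<Sum>i\<in>{1..K} - \<Union>\<sigma>. h i) + (\<Sum>i\<in>\<Union>\<sigma>. h i)"
    by (subst e, rule sum.union_disjoint) (use f in auto)
  also have "(\<Sum>i\<in>\<Union>\<sigma>. h i) = (\<Sum>A\<in>\<sigma>. \<Sum>i\<in>A. h i)"
    using sum.UNION_disjoint[of \<sigma> "\<lambda>A. A" h] hyp_finite[OF assms] hyp_cl_finite[OF assms] assms
    unfolding is_hypothesis_def by auto
  finally show ?thesis .
qed

lemma swap_pow:
  fixes f :: "'x::finite \<Rightarrow> real"
  assumes "finite A"
  shows "(\<Prod>i\<in>A. \<Prod>a\<in>UNIV. f a ^ c i a) = (\<Prod>a\<in>UNIV. f a ^ (\<Sum>i\<in>A. c i a))"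
  by (simp add: power_sum prod.swap[of _ A])

lemma Ws_gibbs_form:
  assumes "finite A" "A \<noteq> {}" "\<forall>i\<in>A. xt i \<noteq> []"
  shows "Ws xt A a = real (\<Sum>i\<in>A. count_list (xt i) a) / real (\<Sum>b\<in>UNIV. \<Sum>i\<in>A. count_list (xt i) b)"
proof -
  have "(\<Sum>b\<in>UNIV. \<Sum>i\<in>A. count_list (xt i) b) = (\<Sum>i\<in>A. length (xt i))"
    by (subst sum.swap) (simp add: sum_count_UNIV)
  then show ?thesis unfolding Ws_def by simp
qed

lemma upper:
  fixes xt :: "nat \<Rightarrow> 'x::finite list"
  assumes hyp: "is_hypothesis K \<sigma>" and ne: "\<forall>i\<in>{1..K}. xt i \<noteq> []"
    and Q: "Q \<in> Lambda K \<sigma>"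
  shows "lik K xt Q \<le> lik K xt (Qs \<sigma> xt)"
proof -
  have dist: "is_dist (Q i)" if "i \<in> {1..K}" for i using Q that unfolding Lambda_def by blast
  define \<phi> where "\<phi> R i = (\<Prod>a\<in>UNIV. R i a ^ count_list (xt i) a)" for R :: "nat \<Rightarrow> 'x \<Rightarrow> real" and i
  have \<phi>nn: "0 \<le> \<phi> Q i" if "i \<in> {1..K}" for i
    using dist[OF that] unfolding \<phi>_def is_dist_def by (intro prod_nonneg) auto
  have rem: "\<phi> Q i \<le> \<phi> (Qs \<sigma> xt) i" if i: "i \<in> {1..K} - \<Union>\<sigma>" for i
  proof -
    have "\<phi> Q i \<le> (\<Prod>a\<in>UNIV. (count_list (xt i) a / real (length (xt i))) ^ count_list (xt i) a)"
      unfolding \<phi>_def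
      by (rule gibbs) (use dist[of i] i ne in \<open>auto simp: is_dist_def sum_count_UNIV\<close>)
    also have "\<dots> = \<phi> (Qs \<sigma> xt) i"
      unfolding \<phi>_def Qs_def using i by (simp add: emp_dist_count)
    finally show ?thesis .
  qed
  have clu: "(\<Prod>i\<in>A. \<phi> Q i) \<le> (\<Prod>i\<in>A. \<phi> (Qs \<sigma> xt) i)" if A: "A \<in> \<sigma>" for A
  proof -
    obtain fA: "finite A" and neA: "A \<noteq> {}" using hyp_cl_finite[OF hyp A] by blast
    then obtain i0 where i0: "i0 \<in> A" by blast
    have Asub: "A \<subseteq> {1..K}" using hyp_sub[OF hyp] A by blast
    have eqQ: "Q i = Q i0" if "i \<in> A" for i using Q A i0 that unfolding Lambda_def by blast
    have eqQs: "Qs \<sigma> xt i = Ws xt A" if "i \<in> A" for i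
      using that A cl_eq[OF hyp A that] unfolding Qs_def by auto
    have "(\<Prod>i\<in>A. \<phi> Q i) = (\<Prod>a\<in>UNIV. Q i0 a ^ (\<Sum>i\<in>A. count_list (xt i) a))"
      unfolding \<phi>_def by (subst swap_pow[OF fA, symmetric]) (auto intro!: prod.cong simp: eqQ)
    also have "\<dots> \<le> (\<Prod>a\<in>UNIV. (real (\<Sum>i\<in>A. count_list (xt i) a) / real (\<Sum>b\<in>UNIV. \<Sum>i\<in>A. count_list (xt i) b)) ^ (\<Sum>i\<in>A. count_list (xt i) a))"
    proof (rule gibbs)
      have "(\<Sum>b\<in>UNIV. \<Sum>i\<in>A. count_list (xt i) b) = (\<Sum>i\<in>A. length (xt i))"
        by (subst sum.swap) (simp add: sum_count_UNIV)
      moreover have "length (xt i0) > 0" using ne i0 Asub by auto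
      moreover have "length (xt i0) \<le> (\<Sum>i\<in>A. length (xt i))"
        using fA i0 by (intro member_le_sum) auto
      ultimately have "0 < (\<Sum>b\<in>UNIV. \<Sum>i\<in>A. count_list (xt i) b)" by linarith
      then show "0 < real (\<Sum>b\<in>UNIV. \<Sum>i\<in>A. count_list (xt i) b)" by (simp only: of_nat_0_less_iff)
      show "\<And>a. 0 \<le> Q i0 a" "(\<Sum>a\<in>UNIV. Q i0 a) = 1" using dist[of i0] i0 Asub by (auto simp: is_dist_def)
    qed simp
    also have "\<dots> = (\<Prod>a\<in>UNIV. Ws xt A a ^ (\<Sum>i\<in>A. count_list (xt i) a))"
    proof -
      have "\<forall>i\<in>A. xt i \<noteq> []" using ne Asub by auto
      from Ws_gibbs_form[OF fA neA this] show ?thesis by simp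
    qed
    also have "\<dots> = (\<Prod>i\<in>A. \<phi> (Qs \<sigma> xt) i)"
      unfolding \<phi>_def by (subst swap_pow[OF fA, symmetric]) (auto intro!: prod.cong simp: eqQs)
    finally show ?thesis .
  qed
  have "lik K xt Q = (\<Prod>i\<in>{1..K} - \<Union>\<sigma>. \<phi> Q i) * (\<Prod>A\<in>\<sigma>. \<Prod>i\<in>A. \<phi> Q i)"
    unfolding lik_def \<phi>_def by (rule decomp_prod[OF hyp])
  also have "\<dots> \<le> (\<Prod>i\<in>{1..K} - \<Union>\<sigma>. \<phi> (Qs \<sigma> xt) i) * (\<Prod>A\<in>\<sigma>. \<Prod>i\<in>A. \<phi> (Qs \<sigma> xt) i)"
  proof (rule mult_mono)
    show "(\<Prod>i\<in>{1..K} - \<Union>\<sigma>. \<phi> Q i) \<le> (\<Prod>i\<in>{1..K} - \<Union>\<sigma>. \<phi> (Qs \<sigma> xt) i)"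
      using rem \<phi>nn by (intro prod_mono) auto
    show "(\<Prod>A\<in>\<sigma>. \<Prod>i\<in>A. \<phi> Q i) \<le> (\<Prod>A\<in>\<sigma>. \<Prod>i\<in>A. \<phi> (Qs \<sigma> xt) i)"
    proof (rule prod_mono, rule conjI)
      fix A assume A: "A \<in> \<sigma>"
      have "A \<subseteq> {1..K}" using hyp_sub[OF hyp] A by blast
      then show "0 \<le> (\<Prod>i\<in>A. \<phi> Q i)" using \<phi>nn by (intro prod_nonneg) auto
      show "(\<Prod>i\<in>A. \<phi> Q i) \<le> (\<Prod>i\<in>A. \<phi> (Qs \<sigma> xt) i)" by (rule clu[OF A])
    qed
    show "0 \<le> (\<Prod>i\<in>{1..K} - \<Union>\<sigma>. \<phi> (Qs \<sigma> xt) i)"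
    proof (intro prod_nonneg)
      fix i assume i: "i \<in> {1..K} - \<Union>\<sigma>"
      then have "0 \<le> \<phi> Q i" using \<phi>nn by blast
      then show "0 \<le> \<phi> (Qs \<sigma> xt) i" using rem[OF i] by linarith
    qed
    show "0 \<le> (\<Prod>A\<in>\<sigma>. \<Prod>i\<in>A. \<phi> Q i)"
      using \<phi>nn hyp_sub[OF hyp] by (intro prod_nonneg) blast
  qed
  also have "\<dots> = lik K xt (Qs \<sigma> xt)"
    unfolding lik_def \<phi>_def by (rule decomp_prod[OF hyp, symmetric])
  finally show ?thesis .
qed



lemma Ws_pos:
  assumes hyp: "is_hypothesis K \<sigma>" and ne: "\<forall>i\<in>{1..K}. xt i \<noteq> []"
    and A: "A \<in> \<sigma>" and i: "i \<in> A" and c: "count_list (xt i) a > 0"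
  shows "Ws xt A a > 0"
proof -
  have fA: "finite A" using hyp_cl_finite[OF hyp A] by blast
  have Asub: "A \<subseteq> {1..K}" using hyp_sub[OF hyp] A by blast
  have "real (count_list (xt i) a) \<le> (\<Sum>j\<in>A. real (count_list (xt j) a))"
    using fA i by (intro member_le_sum) auto
  moreover have "real (length (xt i)) \<le> (\<Sum>j\<in>A. real (length (xt j)))"
    using fA i by (intro member_le_sum) auto
  moreover have "length (xt i) > 0" using ne i Asub by auto
  ultimately show ?thesis unfolding Ws_def using c by (intro divide_pos_pos) linarith+
qed

lemma Qs_pos:
  assumes hyp: "is_hypothesis K \<sigma>" and ne: "\<forall>i\<in>{1..K}. xt i \<noteq> []"
    and i: "i \<in> {1..K}" and c: "count_list (xt i) a > 0"
  shows "Qs \<sigma> xt i a > 0"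
proof (cases "i \<in> \<Union>\<sigma>")
  case True
  then obtain A where A: "A \<in> \<sigma>" "i \<in> A" by blast
  then show ?thesis using Ws_pos[OF hyp ne A c] cl_eq[OF hyp A] True unfolding Qs_def by simp
next
  case False
  then show ?thesis using c ne i unfolding Qs_def emp_dist_count by simp
qed

lemma lik_Qs_pos:
  assumes hyp: "is_hypothesis K \<sigma>" and ne: "\<forall>i\<in>{1..K}. xt i \<noteq> []"
  shows "lik K xt (Qs \<sigma> xt) > 0"
  unfolding lik_def
proof (intro prod_pos)
  fix i a assume i: "i \<in> {1..K}"
  show "0 < Qs \<sigma> xt i a ^ count_list (xt i) a"
  proof (cases "count_list (xt i) a = 0")
    case False then show ?thesis using Qs_pos[OF hyp ne i, of a] by simp
  qed simp
qed

lemma ln_lik: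
  assumes hyp: "is_hypothesis K \<sigma>" and ne: "\<forall>i\<in>{1..K}. xt i \<noteq> []"
  shows "ln (lik K xt (Qs \<sigma> xt)) = (\<Sum>i\<in>{1..K}. \<Sum>a\<in>UNIV. real (count_list (xt i) a) * ln (Qs \<sigma> xt i a))"
proof -
  have nz: "Qs \<sigma> xt i a ^ count_list (xt i) a \<noteq> 0" if "i \<in> {1..K}" for i a
  proof (cases "count_list (xt i) a = 0")
    case False then show ?thesis using Qs_pos[OF hyp ne that, of a] by simp
  qed simp
  have "ln (lik K xt (Qs \<sigma> xt)) = (\<Sum>i\<in>{1..K}. ln (\<Prod>a\<in>UNIV. Qs \<sigma> xt i a ^ count_list (xt i) a))"
    unfolding lik_def
  proof (rule ln_prod)
    fix i assume "i \<in> {1..K}"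
    then show "(\<Prod>a\<in>UNIV. Qs \<sigma> xt i a ^ count_list (xt i) a) \<noteq> 0"
      using nz by (subst prod_zero_iff) auto
  qed simp
  also have "\<dots> = (\<Sum>i\<in>{1..K}. \<Sum>a\<in>UNIV. ln (Qs \<sigma> xt i a ^ count_list (xt i) a))"
    by (rule sum.cong, simp, rule ln_prod) (use nz in auto)
  also have "\<dots> = (\<Sum>i\<in>{1..K}. \<Sum>a\<in>UNIV. real (count_list (xt i) a) * ln (Qs \<sigma> xt i a))"
    by (simp add: ln_realpow)
  finally show ?thesis .
qed

lemma Gdiv_eq:
  assumes hyp: "is_hypothesis K \<sigma>" and ne: "\<forall>i\<in>{1..K}. xt i \<noteq> []"
    and t: "t > (0::nat)"
    and w: "w = (\<lambda>i. real (length (xt i)) / real t)" and P: "P = (\<lambda>i. emp_dist (xt i))"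
    and A: "A \<in> \<sigma>"
  shows "real t * Gdiv P w A = (\<Sum>i\<in>A. \<Sum>a\<in>UNIV. real (count_list (xt i) a) * (ln (P i a) - ln (Ws xt A a)))"
proof -
  obtain fA: "finite A" and neA: "A \<noteq> {}" using hyp_cl_finite[OF hyp A] by blast
  have Asub: "A \<subseteq> {1..K}" using hyp_sub[OF hyp] A by blast
  have lenpos: "real (length (xt i)) > 0" if "i \<in> A" for i using ne Asub that by auto
  have wpos: "w i > 0" if "i \<in> A" for i using lenpos[OF that] t w by simp
  have notall: "\<not> (\<forall>i\<in>A. w i = 0)" using neA wpos by force
  have W: "(\<lambda>a. (\<Sum>i\<in>A. w i * P i a) / (\<Sum>i\<in>A. w i)) = Ws xt A"
  proof
    fix a
    have "(\<Sum>i\<in>A. w i * P i a) = (\<Sum>i\<in>A. real (count_list (xt i) a)) / real t"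
      unfolding sum_divide_distrib
      by (rule sum.cong) (use lenpos in \<open>auto simp: w P emp_dist_count\<close>)
    moreover have "(\<Sum>i\<in>A. w i) = (\<Sum>i\<in>A. real (length (xt i))) / real t"
      unfolding sum_divide_distrib w by simp
    ultimately show "(\<Sum>i\<in>A. w i * P i a) / (\<Sum>i\<in>A. w i) = Ws xt A a"
      unfolding Ws_def using t by simp
  qed
  have "real t * Gdiv P w A = (\<Sum>i\<in>A. real t * w i * KL (P i) (Ws xt A))"
    unfolding Gdiv_def using notall W by (simp add: Let_def sum_distrib_left mult.assoc)
  also have "\<dots> = (\<Sum>i\<in>A. \<Sum>a\<in>UNIV. real (count_list (xt i) a) * (ln (P i a) - ln (Ws xt A a)))"
  proof (rule sum.cong)
    fix i assume i: "i \<in> A"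
    have tw: "real t * w i = real (length (xt i))" using t w by simp
    show "real t * w i * KL (P i) (Ws xt A) = (\<Sum>a\<in>UNIV. real (count_list (xt i) a) * (ln (P i a) - ln (Ws xt A a)))"
      unfolding tw KL_def sum_distrib_left
    proof (rule sum.cong)
      fix a
      show "real (length (xt i)) * (if P i a = 0 then 0 else P i a * ln (P i a / Ws xt A a)) =
            real (count_list (xt i) a) * (ln (P i a) - ln (Ws xt A a))"
      proof (cases "count_list (xt i) a = 0")
        case True then show ?thesis by (simp add: P emp_dist_count)
      next
        case False
        have Wp: "Ws xt A a > 0" using Ws_pos[OF hyp ne A i] False by simp
        have Pp: "P i a > 0" using False lenpos[OF i] by (simp add: P emp_dist_count)
        have "real (length (xt i)) * P i a = real (count_list (xt i) a)"
          using lenpos[OF i] by (simp add: P emp_dist_count)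
        then show ?thesis using Wp Pp by (simp add: ln_div mult.assoc[symmetric])
      qed
    qed simp
  qed simp
  finally show ?thesis .
qed



lemma ln_lik_formula:
  assumes hyp: "is_hypothesis K \<sigma>" and ne: "\<forall>i\<in>{1..K}. xt i \<noteq> []"
    and t: "t > (0::nat)"
    and w: "w = (\<lambda>i. real (length (xt i)) / real t)" and P: "P = (\<lambda>i. emp_dist (xt i))"
  shows "ln (lik K xt (Qs \<sigma> xt)) = (\<Sum>i\<in>{1..K}. \<Sum>a\<in>UNIV. real (count_list (xt i) a) * ln (P i a)) - real t * g_hyp P w \<sigma>"
proof -
  define D where "D i = (\<Sum>a\<in>UNIV. real (count_list (xt i) a) * (ln (P i a) - ln (Qs \<sigma> xt i a)))" for i
  have "ln (lik K xt (Qs \<sigma> xt)) = (\<Sum>i\<in>{1..K}. (\<Sum>a\<in>UNIV. real (count_list (xt i) a) * ln (P i a)) - D i)"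
    unfolding ln_lik[OF hyp ne] D_def
    by (rule sum.cong) (simp_all add: right_diff_distrib sum_subtractf)
  also have "\<dots> = (\<Sum>i\<in>{1..K}. \<Sum>a\<in>UNIV. real (count_list (xt i) a) * ln (P i a)) - (\<Sum>i\<in>{1..K}. D i)"
    by (simp add: sum_subtractf)
  also have "(\<Sum>i\<in>{1..K}. D i) = real t * g_hyp P w \<sigma>"
  proof -
    have "(\<Sum>i\<in>{1..K}. D i) = (\<Sum>i\<in>{1..K} - \<Union>\<sigma>. D i) + (\<Sum>A\<in>\<sigma>. \<Sum>i\<in>A. D i)"
      by (rule decomp_sum[OF hyp])
    also have "(\<Sum>i\<in>{1..K} - \<Union>\<sigma>. D i) = 0"
      by (rule sum.neutral) (auto simp: D_def Qs_def P)
    also have "(\<Sum>A\<in>\<sigma>. \<Sum>i\<in>A. D i) = (\<Sum>A\<in>\<sigma>. real t * Gdiv P w A)"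
    proof (rule sum.cong)
      fix A assume A: "A \<in> \<sigma>"
      have "(\<Sum>i\<in>A. D i) = (\<Sum>i\<in>A. \<Sum>a\<in>UNIV. real (count_list (xt i) a) * (ln (P i a) - ln (Ws xt A a)))"
        unfolding D_def by (rule sum.cong) (use A cl_eq[OF hyp A] in \<open>auto simp: Qs_def\<close>)
      then show "(\<Sum>i\<in>A. D i) = real t * Gdiv P w A"
        using Gdiv_eq[OF hyp ne t w P A] by simp
    qed simp
    finally show ?thesis by (simp add: g_hyp_def sum_distrib_left)
  qed
  finally show ?thesis .
qed

definition cidx :: "nat set set \<Rightarrow> nat \<Rightarrow> nat" where
  "cidx \<sigma> i = (if i \<in> \<Union>\<sigma> then Min (cl \<sigma> i) else 0)"

lemma cidx_cl:
  assumes hyp: "is_hypothesis K \<sigma>" and A: "A \<in> \<sigma>" and i: "i \<in> A"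
  shows "cidx \<sigma> i = Min A" "Min A \<in> A" "1 \<le> Min A" "Min A \<le> K"
proof -
  show "cidx \<sigma> i = Min A" using A i cl_eq[OF hyp A i] unfolding cidx_def by auto
  show MA: "Min A \<in> A" using hyp_cl_finite[OF hyp A] by (intro Min_in) auto
  have "A \<subseteq> {1..K}" using hyp_sub[OF hyp] A by blast
  then show "1 \<le> Min A" "Min A \<le> K" using MA by auto
qed

lemma cidx_distinct:
  assumes hyp: "is_hypothesis K \<sigma>" and G1: "G1 \<in> groups K \<sigma>" and G2: "G2 \<in> groups K \<sigma>"
    and neq: "G1 \<noteq> G2" and i: "i \<in> G1" and j: "j \<in> G2"
  shows "cidx \<sigma> i \<noteq> cidx \<sigma> j"
proof (cases "G1 \<in> \<sigma>")
  case g1: True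
  show ?thesis
  proof (cases "G2 \<in> \<sigma>")
    case True
    have d: "G1 \<inter> G2 = {}" using hyp g1 True neq unfolding is_hypothesis_def by blast
    then show ?thesis using cidx_cl[OF hyp g1 i] cidx_cl[OF hyp True j] by auto
  next
    case False
    then have "G2 = {1..K} - \<Union>\<sigma>" using G2 unfolding groups_def by auto
    then have "cidx \<sigma> j = 0" using j unfolding cidx_def by auto
    then show ?thesis using cidx_cl[OF hyp g1 i] by auto
  qed
next
  case g1: False
  then have e1: "G1 = {1..K} - \<Union>\<sigma>" using G1 unfolding groups_def by auto
  then have c1: "cidx \<sigma> i = 0" using i unfolding cidx_def by auto
  show ?thesis
  proof (cases "G2 \<in> \<sigma>")
    case True
    then show ?thesis using cidx_cl[OF hyp True j] c1 by auto
  next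
    case False
    then have "G2 = {1..K} - \<Union>\<sigma>" using G2 unfolding groups_def by auto
    then show ?thesis using e1 neq by simp
  qed
qed

lemma groups_sub: "is_hypothesis K \<sigma> \<Longrightarrow> G \<in> groups K \<sigma> \<Longrightarrow> G \<subseteq> {1..K}"
  unfolding groups_def using hyp_sub by blast

lemma Qs_dist:
  assumes hyp: "is_hypothesis K \<sigma>" and ne: "\<forall>i\<in>{1..K}. xt i \<noteq> []" and i: "i \<in> {1..K}"
  shows "(\<forall>a. Qs \<sigma> xt i a \<ge> 0) \<and> (\<Sum>a\<in>UNIV. Qs \<sigma> xt i a) = 1"
proof (cases "i \<in> \<Union>\<sigma>")
  case True
  then obtain A where A: "A \<in> \<sigma>" "i \<in> A" by blast
  have Q: "Qs \<sigma> xt i = Ws xt A" using A cl_eq[OF hyp A] unfolding Qs_def by auto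
  have fA: "finite A" using hyp_cl_finite[OF hyp A(1)] by blast
  have Asub: "A \<subseteq> {1..K}" using hyp_sub[OF hyp] A by blast
  have "real (length (xt i)) \<le> (\<Sum>j\<in>A. real (length (xt j)))"
    using fA A by (intro member_le_sum) auto
  moreover have "length (xt i) > 0" using ne i by auto
  ultimately have Dp: "(\<Sum>j\<in>A. real (length (xt j))) > 0" by linarith
  have "(\<Sum>a\<in>UNIV. \<Sum>j\<in>A. real (count_list (xt j) a)) = (\<Sum>j\<in>A. real (length (xt j)))"
    by (subst sum.swap) (simp add: of_nat_sum[symmetric] sum_count_UNIV del: of_nat_sum)
  then have "(\<Sum>a\<in>UNIV. Ws xt A a) = 1"
    unfolding Ws_def sum_divide_distrib[symmetric] using Dp by simp
  moreover have "\<forall>a. Ws xt A a \<ge> 0" unfolding Ws_def by (auto intro!: divide_nonneg_nonneg sum_nonneg)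
  ultimately show ?thesis using Q by simp
next
  case False
  then have Q: "Qs \<sigma> xt i = emp_dist (xt i)" unfolding Qs_def by auto
  have "(\<Sum>a\<in>UNIV. real (count_list (xt i) a)) = real (length (xt i))"
    by (simp add: of_nat_sum[symmetric] sum_count_UNIV del: of_nat_sum)
  then have "(\<Sum>a\<in>UNIV. emp_dist (xt i) a) = 1"
    unfolding emp_dist_count sum_divide_distrib[symmetric] using ne i by simp
  then show ?thesis using Q by (simp add: emp_dist_count)
qed



lemma two_elems:
  assumes "CARD('x) \<ge> 2"
  obtains a0 a1 :: "'x::finite" where "a0 \<noteq> a1"
proof -
  obtain a0 :: 'x where True by blast
  have "\<exists>a1. a1 \<noteq> a0"
  proof (rule ccontr)
    assume "\<not> (\<exists>a1. a1 \<noteq> a0)"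
    then have eq: "(UNIV :: 'x set) = {a0}" by auto
    have "card (UNIV :: 'x set) = card {a0}" by (simp only: eq)
    then have "card (UNIV :: 'x set) = 1" by simp
    then show False using assms by simp
  qed
  then show ?thesis using that by blast
qed

lemma sup_lik:
  fixes xt :: "nat \<Rightarrow> 'x::finite list"
  assumes hyp: "is_hypothesis K \<sigma>" and ne: "\<forall>i\<in>{1..K}. xt i \<noteq> []"
    and card2: "CARD('x) \<ge> 2"
  shows "(SUP Q\<in>(Lambda K \<sigma> :: (nat \<Rightarrow> 'x \<Rightarrow> real) set). ereal (lik K xt Q)) = ereal (lik K xt (Qs \<sigma> xt))"
proof (rule antisym)
  show "(SUP Q\<in>(Lambda K \<sigma> :: (nat \<Rightarrow> 'x \<Rightarrow> real) set). ereal (lik K xt Q)) \<le> ereal (lik K xt (Qs \<sigma> xt))"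
    using upper[OF hyp ne] by (intro SUP_least) simp
next
  obtain a0 a1 :: 'x where a01: "a0 \<noteq> a1" using two_elems[OF card2] by blast
  define s where "s i = real (cidx \<sigma> i) / real (K + 1)" for i
  define R where "R i a = (if a = a0 then s i else 0) + (if a = a1 then 1 - s i else 0)" for i a
  define Qe where "Qe \<epsilon> i a = (1 - \<epsilon>) * Qs \<sigma> xt i a + \<epsilon> * R i a" for \<epsilon> :: real and i a
  have s_bnd: "0 \<le> s i \<and> s i \<le> 1" if i: "i \<in> {1..K}" for i
  proof (cases "i \<in> \<Union>\<sigma>")
    case True
    then obtain A where A: "A \<in> \<sigma>" "i \<in> A" by blast
    then show ?thesis using cidx_cl[OF hyp A] unfolding s_def by (simp add: field_simps)
  next
    case False then show ?thesis unfolding s_def cidx_def by simp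
  qed
  have R0: "R i a0 = s i" for i unfolding R_def using a01 by simp
  have Rdist: "(\<forall>a. R i a \<ge> 0) \<and> (\<Sum>a\<in>UNIV. R i a) = 1" if i: "i \<in> {1..K}" for i
  proof
    show "\<forall>a. R i a \<ge> 0" using s_bnd[OF i] unfolding R_def by auto
    have "(\<Sum>a\<in>UNIV. R i a) = s i + (1 - s i)"
      unfolding R_def by (simp add: sum.distrib)
    then show "(\<Sum>a\<in>UNIV. R i a) = 1" by simp
  qed
  define Pairs where "Pairs = {p \<in> {1..K} \<times> {1..K}. cidx \<sigma> (fst p) \<noteq> cidx \<sigma> (snd p)}"
  have ev_pairs: "eventually (\<lambda>\<epsilon>. \<forall>p\<in>Pairs. Qe \<epsilon> (fst p) a0 \<noteq> Qe \<epsilon> (snd p) a0) (at_right 0)"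
  proof (rule eventually_ball_finite)
    show "finite Pairs" unfolding Pairs_def by (rule finite_subset[of _ "{1..K} \<times> {1..K}"]) auto
    show "\<forall>p\<in>Pairs. eventually (\<lambda>\<epsilon>. Qe \<epsilon> (fst p) a0 \<noteq> Qe \<epsilon> (snd p) a0) (at_right 0)"
    proof
      fix p assume p: "p \<in> Pairs"
      obtain i j where ij: "p = (i, j)" by (cases p)
      have sne: "s i \<noteq> s j" using p ij unfolding Pairs_def s_def by (simp add: divide_right_mono)
      define qi where "qi = Qs \<sigma> xt i a0"
      define qj where "qj = Qs \<sigma> xt j a0"
      have f: "Qe \<epsilon> i a0 - Qe \<epsilon> j a0 = (1 - \<epsilon>) * (qi - qj) + \<epsilon> * (s i - s j)" for \<epsilon>
        unfolding Qe_def qi_def qj_def R0 by (simp add: algebra_simps)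
      have "eventually (\<lambda>\<epsilon>. Qe \<epsilon> i a0 - Qe \<epsilon> j a0 \<noteq> 0) (at_right 0)"
      proof (cases "qi = qj")
        case True
        have "eventually (\<lambda>\<epsilon>. (0::real) < \<epsilon>) (at_right 0)" by (rule eventually_at_right_less)
        then show ?thesis
          by (rule eventually_mono) (use sne True f in simp)
      next
        case False
        have "((\<lambda>\<epsilon>::real. (1 - \<epsilon>) * (qi - qj) + \<epsilon> * (s i - s j)) \<longlongrightarrow> (1 - 0) * (qi - qj) + 0 * (s i - s j)) (at_right 0)"
          by (intro tendsto_intros)
        then have "((\<lambda>\<epsilon>::real. (1 - \<epsilon>) * (qi - qj) + \<epsilon> * (s i - s j)) \<longlongrightarrow> qi - qj) (at_right 0)"
          by simp
        from tendsto_imp_eventually_ne[OF this, of 0] False show ?thesis by (simp add: f)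
      qed
      then show "eventually (\<lambda>\<epsilon>. Qe \<epsilon> (fst p) a0 \<noteq> Qe \<epsilon> (snd p) a0) (at_right 0)"
        using ij by (simp add: eventually_mono)
    qed
  qed
  have ev01: "eventually (\<lambda>\<epsilon>::real. \<epsilon> \<in> {0<..<1}) (at_right 0)"
    by (rule eventually_at_right_real) simp
  have inL: "Qe \<epsilon> \<in> Lambda K \<sigma>"
    if e01: "\<epsilon> \<in> {0<..<1}" and pe: "\<forall>p\<in>Pairs. Qe \<epsilon> (fst p) a0 \<noteq> Qe \<epsilon> (snd p) a0" for \<epsilon>
    unfolding Lambda_def
  proof (intro CollectI conjI ballI)
    fix i assume i: "i \<in> {1..K}"
    have q: "(\<forall>a. Qs \<sigma> xt i a \<ge> 0) \<and> (\<Sum>a\<in>UNIV. Qs \<sigma> xt i a) = 1" by (rule Qs_dist[OF hyp ne i])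
    have r: "(\<forall>a. R i a \<ge> 0) \<and> (\<Sum>a\<in>UNIV. R i a) = 1" by (rule Rdist[OF i])
    have "(\<Sum>a\<in>UNIV. Qe \<epsilon> i a) = (1 - \<epsilon>) * (\<Sum>a\<in>UNIV. Qs \<sigma> xt i a) + \<epsilon> * (\<Sum>a\<in>UNIV. R i a)"
      unfolding Qe_def by (simp add: sum.distrib sum_distrib_left)
    then show "is_dist (Qe \<epsilon> i)" unfolding is_dist_def Qe_def using q r e01 by auto
  next
    fix A i j assume A: "A \<in> \<sigma>" and i: "i \<in> A" and j: "j \<in> A"
    have e1: "Qs \<sigma> xt i = Qs \<sigma> xt j" using A i j cl_eq[OF hyp A] unfolding Qs_def by auto
    have e2: "cidx \<sigma> i = cidx \<sigma> j" using cidx_cl[OF hyp A i] cidx_cl[OF hyp A j] by simp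
    show "Qe \<epsilon> i = Qe \<epsilon> j" unfolding Qe_def R_def s_def by (simp only: e1 e2)
  next
    fix G1 G2 assume G1: "G1 \<in> groups K \<sigma>" and G2: "G2 \<in> groups K \<sigma>"
    show "G1 \<noteq> G2 \<longrightarrow> (\<forall>i\<in>G1. \<forall>j\<in>G2. Qe \<epsilon> i \<noteq> Qe \<epsilon> j)"
    proof (intro impI ballI)
      fix i j assume neq: "G1 \<noteq> G2" and i: "i \<in> G1" and j: "j \<in> G2"
      have "(i, j) \<in> Pairs"
        using cidx_distinct[OF hyp G1 G2 neq i j] groups_sub[OF hyp G1] groups_sub[OF hyp G2] i j
        unfolding Pairs_def by auto
      then have "Qe \<epsilon> i a0 \<noteq> Qe \<epsilon> j a0" using pe by auto
      then show "Qe \<epsilon> i \<noteq> Qe \<epsilon> j" by auto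
    qed
  qed
  have evL: "eventually (\<lambda>\<epsilon>. Qe \<epsilon> \<in> Lambda K \<sigma>) (at_right 0)"
    using ev01 ev_pairs by eventually_elim (use inL in blast)
  have lim: "((\<lambda>\<epsilon>. lik K xt (Qe \<epsilon>)) \<longlongrightarrow> lik K xt (Qs \<sigma> xt)) (at_right 0)"
  proof -
    have "((\<lambda>\<epsilon>. Qe \<epsilon> i a) \<longlongrightarrow> Qs \<sigma> xt i a) (at_right 0)" for i a
    proof -
      have "((\<lambda>\<epsilon>::real. (1 - \<epsilon>) * Qs \<sigma> xt i a + \<epsilon> * R i a) \<longlongrightarrow> (1 - 0) * Qs \<sigma> xt i a + 0 * R i a) (at_right 0)"
        by (intro tendsto_intros)
      then show ?thesis unfolding Qe_def by simp
    qed
    then show ?thesis unfolding lik_def by (intro tendsto_prod tendsto_power)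
  qed
  show "ereal (lik K xt (Qs \<sigma> xt)) \<le> (SUP Q\<in>(Lambda K \<sigma> :: (nat \<Rightarrow> 'x \<Rightarrow> real) set). ereal (lik K xt Q))"
  proof (rule tendsto_upperbound)
    show "((\<lambda>\<epsilon>. ereal (lik K xt (Qe \<epsilon>))) \<longlongrightarrow> ereal (lik K xt (Qs \<sigma> xt))) (at_right 0)"
      by (rule tendsto_ereal[OF lim])
    show "eventually (\<lambda>\<epsilon>. ereal (lik K xt (Qe \<epsilon>)) \<le> (SUP Q\<in>(Lambda K \<sigma> :: (nat \<Rightarrow> 'x \<Rightarrow> real) set). ereal (lik K xt Q))) (at_right (0::real))"
      using evL by (rule eventually_mono) (rule SUP_upper)
  qed simp
qed



lemma Gdiv_cong: "(\<And>i. i \<in> A \<Longrightarrow> w i = w' i) \<Longrightarrow> Gdiv P w A = Gdiv P w' A"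
  unfolding Gdiv_def Let_def by (simp cong: sum.cong)

lemma likelihood_eq:
  fixes xt :: "nat \<Rightarrow> 'x::finite list"
  assumes hyp: "is_hypothesis K \<sigma>" and ne: "\<forall>i\<in>{1..K}. xt i \<noteq> []"
    and card2: "CARD('x) \<ge> 2"
  shows "likelihood K xt \<sigma> = ereal (lik K xt (Qs \<sigma> xt))"
proof -
  have "likelihood K xt \<sigma> = (SUP Q\<in>(Lambda K \<sigma> :: (nat \<Rightarrow> 'x \<Rightarrow> real) set). ereal (lik K xt Q))"
    unfolding likelihood_def lik_def by (simp add: prod_count)
  then show ?thesis using sup_lik[OF hyp ne card2] by simp
qed

theorem mainTheorem10:
  fixes K t :: nat and C :: "nat set set set" and N :: "nat \<Rightarrow> nat"
    and xt :: "nat \<Rightarrow> 'x::finite list" and \<sigma>hat :: "nat set set"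
    and Phat :: "nat \<Rightarrow> 'x \<Rightarrow> real" and w :: "nat \<Rightarrow> real"
    and L :: "nat set set \<Rightarrow> ereal" and Z :: "nat set set \<Rightarrow> nat set set \<Rightarrow> real"
    and F :: "nat set set \<Rightarrow> real"
  assumes "CARD('x) \<ge> 2" and "K \<ge> 2"
    and "clustering_problem K C"
    and "\<forall>i\<in>{1..K}. N i \<ge> 1" and "(\<Sum>i=1..K. N i) = t"
    and "\<forall>i\<in>{1..K}. length (xt i) = N i"
    and Phat_def: "Phat = (\<lambda>i. emp_dist (xt i))"
    and w_def: "w = (\<lambda>i. real (N i) / real t)"
    and L_def: "L = (\<lambda>\<sigma>. likelihood K xt \<sigma>)"
    and Z_def: "Z = (\<lambda>\<sigma>1 \<sigma>2. ln (real_of_ereal (L \<sigma>1) / real_of_ereal (L \<sigma>2)))"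
    and F_def: "F = (\<lambda>\<sigma>. Min ((\<lambda>\<sigma>'. Z \<sigma> \<sigma>') ` (C - {\<sigma>})))"
    and "\<sigma>hat \<in> C" and "\<forall>\<sigma>\<in>C. g_hyp Phat w \<sigma>hat \<le> g_hyp Phat w \<sigma>"
  shows "(\<forall>\<sigma>\<in>C. 0 < L \<sigma> \<and> L \<sigma> < \<infinity>)
    \<and> Max (F ` C) = real t * G_hyp C Phat w \<sigma>hat - real t * g_hyp Phat w \<sigma>hat
    \<and> F \<sigma>hat = Max (F ` C)"
proof -
  note card2 = assms(1) and K2 = assms(2) and CP = assms(3) and N1 = assms(4) and tsum = assms(5)
    and len = assms(6) and shat = assms(12) and gmin = assms(13)
  have finC: "finite C" and cardC: "card C \<ge> 2" and hyps: "\<And>\<sigma>. \<sigma> \<in> C \<Longrightarrow> is_hypothesis K \<sigma>"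
    using CP unfolding clustering_problem_def by auto
  have ne: "\<forall>i\<in>{1..K}. xt i \<noteq> []" using N1 len by fastforce
  have tlen: "t = (\<Sum>i=1..K. length (xt i))" using tsum len by simp
  have tpos: "t > 0"
  proof -
    have "N 1 \<le> (\<Sum>i=1..K. N i)" using K2 by (intro member_le_sum) auto
    then show ?thesis using N1 K2 tsum by force
  qed
  define w' where "w' = (\<lambda>i. real (length (xt i)) / real t)"
  define Cst where "Cst = (\<Sum>i\<in>{1..K}. \<Sum>a\<in>UNIV. real (count_list (xt i) a) * ln (Phat i a))"
  define V where "V \<sigma> = lik K xt (Qs \<sigma> xt)" for \<sigma>
  have gw: "g_hyp Phat w \<sigma> = g_hyp Phat w' \<sigma>" if s: "\<sigma> \<in> C" for \<sigma>
    unfolding g_hyp_def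
  proof (rule sum.cong)
    fix A assume A: "A \<in> \<sigma>"
    have "A \<subseteq> {1..K}" using hyp_sub[OF hyps[OF s]] A by blast
    then show "Gdiv Phat w A = Gdiv Phat w' A"
      by (intro Gdiv_cong) (use len in \<open>auto simp: w_def w'_def\<close>)
  qed simp
  have Vpos: "V \<sigma> > 0" if "\<sigma> \<in> C" for \<sigma>
    unfolding V_def by (rule lik_Qs_pos[OF hyps[OF that] ne])
  have lnV: "ln (V \<sigma>) = Cst - real t * g_hyp Phat w \<sigma>" if s: "\<sigma> \<in> C" for \<sigma>
    unfolding V_def Cst_def gw[OF s] by (rule ln_lik_formula[OF hyps[OF s] ne tpos w'_def Phat_def])
  have LV: "L \<sigma> = ereal (V \<sigma>)" if "\<sigma> \<in> C" for \<sigma>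
    unfolding L_def V_def by (rule likelihood_eq[OF hyps[OF that] ne card2])
  have part1: "\<forall>\<sigma>\<in>C. 0 < L \<sigma> \<and> L \<sigma> < \<infinity>"
    using LV Vpos by auto
  have Zeq: "Z \<sigma>1 \<sigma>2 = real t * g_hyp Phat w \<sigma>2 - real t * g_hyp Phat w \<sigma>1"
    if "\<sigma>1 \<in> C" "\<sigma>2 \<in> C" for \<sigma>1 \<sigma>2
  proof -
    have "Z \<sigma>1 \<sigma>2 = ln (V \<sigma>1 / V \<sigma>2)" unfolding Z_def using LV that by simp
    also have "\<dots> = ln (V \<sigma>1) - ln (V \<sigma>2)" using Vpos[OF that(1)] Vpos[OF that(2)] by (simp add: ln_div)
    finally show ?thesis using lnV that by simp
  qed
  have Cne: "C - {\<sigma>} \<noteq> {}" for \<sigma>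
  proof
    assume "C - {\<sigma>} = {}"
    then have "C \<subseteq> {\<sigma>}" by blast
    then have "card C \<le> card {\<sigma>}" by (intro card_mono) auto
    then have "card C \<le> 1" by simp
    then show False using cardC by simp
  qed
  have Feq: "F \<sigma> = real t * G_hyp C Phat w \<sigma> - real t * g_hyp Phat w \<sigma>" if s: "\<sigma> \<in> C" for \<sigma>
  proof -
    define f where "f y = real t * y - real t * g_hyp Phat w \<sigma>" for y
    have mf: "mono f" unfolding f_def mono_def by (simp add: mult_left_mono)
    have "F \<sigma> = Min (f ` (\<lambda>\<sigma>'. g_hyp Phat w \<sigma>') ` (C - {\<sigma>}))"
      unfolding F_def image_image f_def using Zeq s
      by (intro arg_cong[where f = Min] image_cong) auto
    also have "\<dots> = f (Min ((\<lambda>\<sigma>'. g_hyp Phat w \<sigma>') ` (C - {\<sigma>})))"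
      by (rule mono_Min_commute[OF mf, symmetric]) (use finC Cne in auto)
    finally show ?thesis unfolding f_def G_hyp_def .
  qed
  have Fhat_ge: "F \<sigma> \<le> F \<sigma>hat" if s: "\<sigma> \<in> C" for \<sigma>
  proof (cases "\<sigma> = \<sigma>hat")
    case False
    have "G_hyp C Phat w \<sigma> \<le> g_hyp Phat w \<sigma>hat"
      unfolding G_hyp_def using False shat finC by (intro Min_le) auto
    then have "G_hyp C Phat w \<sigma> \<le> g_hyp Phat w \<sigma>" using gmin s by force
    then have "real t * G_hyp C Phat w \<sigma> \<le> real t * g_hyp Phat w \<sigma>" by (rule mult_left_mono) simp
    then have "F \<sigma> \<le> 0" using Feq[OF s] by linarith
    moreover have "G_hyp C Phat w \<sigma>hat \<ge> g_hyp Phat w \<sigma>hat"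
      unfolding G_hyp_def using finC Cne gmin by (subst Min_ge_iff) auto
    then have "F \<sigma>hat \<ge> 0" using Feq[OF shat] by (simp add: mult_left_mono)
    ultimately show ?thesis by linarith
  qed simp
  have MaxF: "Max (F ` C) = F \<sigma>hat"
    using Fhat_ge shat finC by (intro Max_eqI) auto
  show ?thesis using part1 MaxF Feq[OF shat] by simp
qed

end
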